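(* Let $\mathcal{A}$ be a linear hyperplane arrangement in $\mathbb{R}^n$ and let $L_{n-d},L'_{n-d}$ be linear subspaces of $\mathbb{R}^n$ of codimension $d$. If $L_{n-d}$ is in general position with respect to $\mathcal{A}$, then $$\{R\in\mathcal{R}(\mathcal{A}):\bar R\cap L_{n-d}\neq\{0\}\}=\{R\in\mathcal{R}(\mathcal{A}):R\cap L_{n-d}\neq\varnothing\},$$ $$\#\{R\in\mathcal{R}(\mathcal{A}):\bar R\cap L'_{n-d}\neq\{0\}\}\ge\#\{R\in\mathcal{R}(\mathcal{A}):\bar R\cap L_{n-d}\neq\{0\}\},$$ $$\#\{R\in\mathcal{R}(\mathcal{A}):R\cap L'_{n-d}\neq\varnothing\}\le\#\{R\in\mathcal{R}(\mathcal{A}):R\cap L_{n-d}\neq\varnothing\}.$$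
   Context: A linear hyperplane arrangement $\mathcal{A}$ in $\mathbb{R}^n$ is a finite set of distinct hyperplanes through the origin; $\mathcal{R}(\mathcal{A})$ is the set of connected components of $\mathbb{R}^n\setminus\bigcup_{H\in\mathcal{A}}H$; $\bar R$ is the closure of $R$. For $\mathcal{B}\subset\mathcal{A}$, $\mathrm{rank}(\mathcal{B})=n-\dim\bigcap_{H\in\mathcal{B}}H$. A linear subspace $L_{n-d}$ of codimension $d\le n-1$ is in general position w.r.t. $\mathcal{A}$ if for every nonempty $\mathcal{B}\subset\mathcal{A}$, $\dim\bigcap_{H\in\mathcal{B}}(H\cap L_{n-d})$ equals $n-d-\mathrm{rank}(\mathcal{B})$ if $\mathrm{rank}(\mathcal{B})\le n-d$ and $0$ otherwise. *)

theory Defs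
  imports "HOL-Analysis.Analysis"
begin

definition lin_hyperplane :: "'a::euclidean_space set \<Rightarrow> bool" where
  "lin_hyperplane H \<longleftrightarrow> (\<exists>a. a \<noteq> 0 \<and> H = {x. a \<bullet> x = 0})"

definition lin_arrangement :: "'a::euclidean_space set set \<Rightarrow> bool" where
  "lin_arrangement A \<longleftrightarrow> finite A \<and> (\<forall>H\<in>A. lin_hyperplane H)"

definition regions :: "'a::euclidean_space set set \<Rightarrow> 'a set set" where
  "regions A = components (UNIV - \<Union>A)"

definition arr_rank :: "'a::euclidean_space set set \<Rightarrow> nat" where
  "arr_rank B = DIM('a) - dim (\<Inter>B)"

definition general_position ::
    "'a::euclidean_space set set \<Rightarrow> nat \<Rightarrow> 'a set \<Rightarrow> bool" where
  "general_position A d L \<longleftrightarrow>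
     (\<forall>B. B \<noteq> {} \<and> B \<subseteq> A \<longrightarrow>
        dim (\<Inter>H\<in>B. H \<inter> L) =
          (if arr_rank B \<le> DIM('a) - d then DIM('a) - d - arr_rank B else 0))"

end

theory Submission
  imports Defs
begin


definition hp :: "('b \<Rightarrow> 'a::euclidean_space) \<Rightarrow> 'b \<Rightarrow> 'a set" where
  "hp n H = {x. n H \<bullet> x = 0}"
definition nz :: "('b \<Rightarrow> 'a::euclidean_space) \<Rightarrow> 'b set \<Rightarrow> 'a \<Rightarrow> bool" where
  "nz n A x \<longleftrightarrow> (\<forall>H\<in>A. n H \<bullet> x \<noteq> 0)"
definition sgs :: "('b \<Rightarrow> 'a::euclidean_space) \<Rightarrow> 'b set \<Rightarrow> 'a \<Rightarrow> 'b set" where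
  "sgs n A x = {H\<in>A. n H \<bullet> x > 0}"
definition wk :: "('b \<Rightarrow> 'a::euclidean_space) \<Rightarrow> 'b set \<Rightarrow> 'b set \<Rightarrow> 'a \<Rightarrow> bool" where
  "wk n A P x \<longleftrightarrow> (\<forall>H\<in>A. (H\<in>P \<longrightarrow> n H \<bullet> x \<ge> 0) \<and> (H\<notin>P \<longrightarrow> n H \<bullet> x \<le> 0))"
definition fS :: "('b \<Rightarrow> 'a::euclidean_space) \<Rightarrow> 'b set \<Rightarrow> 'a set \<Rightarrow> 'b set set" where
  "fS n A M = {sgs n A x | x. x \<in> M \<and> nz n A x}"
definition gS :: "('b \<Rightarrow> 'a::euclidean_space) \<Rightarrow> 'a set \<Rightarrow> 'b set \<Rightarrow> 'a set \<Rightarrow> 'b set set" where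
  "gS n V A M = {P. (\<exists>y\<in>V. nz n A y \<and> P = sgs n A y) \<and> (\<exists>x\<in>M. x \<noteq> 0 \<and> wk n A P x)}"
definition gen :: "('b \<Rightarrow> 'a::euclidean_space) \<Rightarrow> 'a set \<Rightarrow> 'b set \<Rightarrow> 'a set \<Rightarrow> bool" where
  "gen n V A M \<longleftrightarrow> (\<forall>B. B \<noteq> {} \<and> B \<subseteq> A \<longrightarrow>
      dim (\<Inter>(hp n ` B) \<inter> M) = dim M - (dim V - dim (\<Inter>(hp n ` B) \<inter> V)))"

lemma small_t:
  assumes "finite A"
  shows "\<exists>t>0. \<forall>H\<in>A. n H \<bullet> x \<noteq> 0 \<longrightarrow> \<bar>t * (n H \<bullet> y)\<bar> < \<bar>n H \<bullet> (x::'a::euclidean_space)\<bar>"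
  using assms
proof (induction A rule: finite_induct)
  case empty
  then show ?case by (rule exI[of _ 1]) auto
next
  case (insert H A)
  then obtain t0 where t0: "t0 > 0" "\<forall>H\<in>A. n H \<bullet> x \<noteq> 0 \<longrightarrow> \<bar>t0 * (n H \<bullet> y)\<bar> < \<bar>n H \<bullet> x\<bar>" by auto
  show ?case
  proof (cases "n H \<bullet> x = 0")
    case True
    then show ?thesis using t0 by (intro exI[of _ t0]) auto
  next
    case False
    define c where "c = n H \<bullet> y"
    define d where "d = n H \<bullet> x"
    define t where "t = min t0 (\<bar>d\<bar> / (\<bar>c\<bar> + 1))"
    have dpos: "\<bar>d\<bar> > 0" using False d_def by auto
    have tpos: "t > 0" using t0 dpos unfolding t_def by (simp add: add_pos_nonneg)
    have "\<bar>t * c\<bar> < \<bar>d\<bar>"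
    proof -
      have "\<bar>t * c\<bar> = t * \<bar>c\<bar>" using tpos by (simp add: abs_mult)
      also have "\<dots> \<le> (\<bar>d\<bar> / (\<bar>c\<bar> + 1)) * \<bar>c\<bar>" unfolding t_def by (intro mult_right_mono) auto
      also have "\<dots> < \<bar>d\<bar>"
      proof -
        have "(\<bar>d\<bar> / (\<bar>c\<bar> + 1)) * \<bar>c\<bar> = \<bar>d\<bar> * (\<bar>c\<bar> / (\<bar>c\<bar> + 1))" by simp
        also have "\<dots> < \<bar>d\<bar> * 1" using dpos by (intro mult_strict_left_mono) auto
        finally show ?thesis by simp
      qed
      finally show ?thesis .
    qed
    moreover have "\<forall>H\<in>A. n H \<bullet> x \<noteq> 0 \<longrightarrow> \<bar>t * (n H \<bullet> y)\<bar> < \<bar>n H \<bullet> x\<bar>"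
    proof (intro ballI impI)
      fix H' assume "H' \<in> A" "n H' \<bullet> x \<noteq> 0"
      then have "\<bar>t0 * (n H' \<bullet> y)\<bar> < \<bar>n H' \<bullet> x\<bar>" using t0 by auto
      moreover have "\<bar>t * (n H' \<bullet> y)\<bar> \<le> \<bar>t0 * (n H' \<bullet> y)\<bar>"
        using tpos unfolding t_def by (simp add: abs_mult mult_right_mono)
      ultimately show "\<bar>t * (n H' \<bullet> y)\<bar> < \<bar>n H' \<bullet> x\<bar>" by linarith
    qed
    ultimately show ?thesis using tpos c_def d_def by (intro exI[of _ t]) auto
  qed
qed

lemma perturb:
  assumes "finite A"
  shows "\<exists>t>0. (\<forall>H\<in>A. n H \<bullet> x \<noteq> 0 \<longrightarrow> sgn (n H \<bullet> (x + t *\<^sub>R z)) = sgn (n H \<bullet> x))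
     \<and> (\<forall>H\<in>A. n H \<bullet> x = 0 \<longrightarrow> sgn (n H \<bullet> (x + t *\<^sub>R z)) = sgn (n H \<bullet> (z::'a::euclidean_space)))"
proof -
  obtain t where t: "t > 0" "\<forall>H\<in>A. n H \<bullet> x \<noteq> 0 \<longrightarrow> \<bar>t * (n H \<bullet> z)\<bar> < \<bar>n H \<bullet> x\<bar>"
    using small_t[OF assms] by blast
  have "sgn (n H \<bullet> (x + t *\<^sub>R z)) = sgn (n H \<bullet> x)" if "H \<in> A" "n H \<bullet> x \<noteq> 0" for H
  proof -
    have "\<bar>t * (n H \<bullet> z)\<bar> < \<bar>n H \<bullet> x\<bar>" using t that by auto
    then show ?thesis by (auto simp: inner_add_right sgn_if abs_if split: if_splits)
  qed
  moreover have "sgn (n H \<bullet> (x + t *\<^sub>R z)) = sgn (n H \<bullet> z)" if "n H \<bullet> x = 0" for H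
    using that t(1) by (simp add: inner_add_right sgn_mult)
  ultimately show ?thesis using t(1) by blast
qed

lemma perturb_sgs:
  assumes "finite A" "nz n A z"
  shows "\<exists>t>0. nz n A (x + t *\<^sub>R z) \<and>
     sgs n A (x + t *\<^sub>R z) = {H\<in>A. n H \<bullet> x > 0 \<or> (n H \<bullet> x = 0 \<and> n H \<bullet> z > 0)}"
proof -
  obtain t where t: "t > 0"
    "\<forall>H\<in>A. n H \<bullet> x \<noteq> 0 \<longrightarrow> sgn (n H \<bullet> (x + t *\<^sub>R z)) = sgn (n H \<bullet> x)"
    "\<forall>H\<in>A. n H \<bullet> x = 0 \<longrightarrow> sgn (n H \<bullet> (x + t *\<^sub>R z)) = sgn (n H \<bullet> z)"
    using perturb[OF assms(1), of n x z] by blast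
  have a: "n H \<bullet> (x + t *\<^sub>R z) \<noteq> 0 \<and> (n H \<bullet> (x + t *\<^sub>R z) > 0 \<longleftrightarrow> n H \<bullet> x > 0 \<or> (n H \<bullet> x = 0 \<and> n H \<bullet> z > 0))"
    if "H \<in> A" for H
  proof (cases "n H \<bullet> x = 0")
    case True
    then have "sgn (n H \<bullet> (x + t *\<^sub>R z)) = sgn (n H \<bullet> z)" using t that by auto
    moreover have "n H \<bullet> z \<noteq> 0" using assms(2) that unfolding nz_def by auto
    ultimately show ?thesis using True by (auto simp: sgn_if split: if_splits)
  next
    case False
    then have "sgn (n H \<bullet> (x + t *\<^sub>R z)) = sgn (n H \<bullet> x)" using t that by auto
    then show ?thesis using False by (auto simp: sgn_if split: if_splits)
  qed
  show ?thesis using t(1) a unfolding nz_def sgs_def by (intro exI[of _ t]) auto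
qed

lemma generic_vec:
  assumes "subspace V" "finite A" "\<forall>H\<in>A. \<not> V \<subseteq> hp n H"
  shows "\<exists>w\<in>V. nz n A (w::'a::euclidean_space)"
  using assms(2,3)
proof (induction A rule: finite_induct)
  case empty
  then show ?case using subspace_0[OF assms(1)] unfolding nz_def by auto
next
  case (insert H A)
  then obtain w where w: "w \<in> V" "nz n A w" by auto
  show ?case
  proof (cases "n H \<bullet> w = 0")
    case False
    then show ?thesis using w unfolding nz_def by auto
  next
    case True
    obtain u where u: "u \<in> V" "n H \<bullet> u \<noteq> 0" using insert.prems unfolding hp_def by auto
    obtain t where t: "t > 0"
      "\<forall>H\<in>A. n H \<bullet> w \<noteq> 0 \<longrightarrow> sgn (n H \<bullet> (w + t *\<^sub>R u)) = sgn (n H \<bullet> w)"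
      "\<forall>H\<in>A. n H \<bullet> w = 0 \<longrightarrow> sgn (n H \<bullet> (w + t *\<^sub>R u)) = sgn (n H \<bullet> u)"
      using perturb[OF insert.hyps(1), of n w u] by blast
    have "w + t *\<^sub>R u \<in> V" using w u assms(1) by (simp add: subspace_add subspace_scale)
    moreover have "nz n (insert H A) (w + t *\<^sub>R u)"
      unfolding nz_def
    proof
      fix H' assume "H' \<in> insert H A"
      then show "n H' \<bullet> (w + t *\<^sub>R u) \<noteq> 0"
      proof
        assume "H' = H" then show ?thesis using True u t(1) by (simp add: inner_add_right)
      next
        assume "H' \<in> A"
        then have "n H' \<bullet> w \<noteq> 0" using w unfolding nz_def by auto
        then show ?thesis using t(2) \<open>H' \<in> A\<close> by (metis sgn_0_0)
      qed
    qed
    ultimately show ?thesis by blast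
  qed
qed

lemma split_mem1: "P \<in> F \<Longrightarrow> H \<notin> P \<Longrightarrow> P - {H} = Q \<Longrightarrow> Q \<in> (\<lambda>P. P - {H}) ` {P\<in>F. H \<notin> P}"
  by blast
lemma split_mem2: "P \<in> F \<Longrightarrow> H \<in> P \<Longrightarrow> P - {H} = Q \<Longrightarrow> Q \<in> (\<lambda>P. P - {H}) ` {P\<in>F. H \<in> P}"
  by blast

lemma card_split:
  assumes "finite A0" "H \<notin> A0" "F \<subseteq> Pow (insert H A0)"
  shows "card F = card ((\<lambda>P. P - {H}) ` {P\<in>F. H \<notin> P} \<union> (\<lambda>P. P - {H}) ` {P\<in>F. H \<in> P})
     + card ((\<lambda>P. P - {H}) ` {P\<in>F. H \<notin> P} \<inter> (\<lambda>P. P - {H}) ` {P\<in>F. H \<in> P})"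
proof -
  have "finite (Pow (insert H A0))" using assms(1) by simp
  then have fin: "finite F" using assms(3) by (rule finite_subset[rotated])
  have "card F = card ({P\<in>F. H \<notin> P} \<union> {P\<in>F. H \<in> P})" by (rule arg_cong[where f=card]) auto
  moreover have "card ({P\<in>F. H \<notin> P} \<union> {P\<in>F. H \<in> P}) = card {P\<in>F. H \<notin> P} + card {P\<in>F. H \<in> P}"
    by (rule card_Un_disjoint) (use fin in auto)
  ultimately have "card F = card {P\<in>F. H \<notin> P} + card {P\<in>F. H \<in> P}" by (rule trans)
  also have "card {P\<in>F. H \<notin> P} = card ((\<lambda>P. P - {H}) ` {P\<in>F. H \<notin> P})"
    by (rule card_image[symmetric]) (auto simp: inj_on_def)
  also have "card {P\<in>F. H \<in> P} = card ((\<lambda>P. P - {H}) ` {P\<in>F. H \<in> P})"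
    proof (rule card_image[symmetric], rule inj_onI)
    fix P Q assume "P \<in> {P\<in>F. H \<in> P}" "Q \<in> {P\<in>F. H \<in> P}" "P - {H} = Q - {H}"
    then have "H \<in> P" "H \<in> Q" by auto
    then have "P = insert H (P - {H})" "Q = insert H (Q - {H})" by auto
    then show "P = Q" using \<open>P - {H} = Q - {H}\<close> by metis
  qed
  finally show ?thesis using fin by (intro trans[OF _ card_Un_Int]) auto
qed

lemma fS_sub: "fS n A M \<subseteq> Pow A" unfolding fS_def sgs_def by auto
lemma gS_sub: "gS n V A M \<subseteq> Pow A" unfolding gS_def sgs_def by auto
lemma fS_fin: "finite A \<Longrightarrow> finite (fS n A M)" using fS_sub by (metis finite_Pow_iff finite_subset)
lemma gS_fin: "finite A \<Longrightarrow> finite (gS n V A M)" using gS_sub by (metis finite_Pow_iff finite_subset)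

lemma fS_memE: "P \<in> fS n A M \<Longrightarrow> \<exists>x\<in>M. nz n A x \<and> P = sgs n A x"
  unfolding fS_def by blast
lemma fS_memI: "x \<in> M \<Longrightarrow> nz n A x \<Longrightarrow> sgs n A x \<in> fS n A M"
  unfolding fS_def by blast

lemma sgs_del: "H \<notin> A0 \<Longrightarrow> sgs n (insert H A0) x - {H} = sgs n A0 x"
  unfolding sgs_def by auto
lemma nz_del: "nz n (insert H A0) x \<Longrightarrow> nz n A0 x"
  unfolding nz_def by auto

lemma convex_comb_sgs:
  assumes "nz n A x1" "nz n A x2" "sgs n A x1 = sgs n A x2" "0 \<le> s" "s \<le> 1"
  shows "nz n A ((1 - s) *\<^sub>R x1 + s *\<^sub>R x2) \<and> sgs n A ((1 - s) *\<^sub>R x1 + s *\<^sub>R x2) = sgs n A x1"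
proof -
  have *: "(n H \<bullet> ((1 - s) *\<^sub>R x1 + s *\<^sub>R x2) > 0 \<and> n H \<bullet> x1 > 0) \<or>
        (n H \<bullet> ((1 - s) *\<^sub>R x1 + s *\<^sub>R x2) < 0 \<and> n H \<bullet> x1 < 0)" if "H \<in> A" for H
  proof -
    have a: "n H \<bullet> x1 \<noteq> 0" "n H \<bullet> x2 \<noteq> 0" using assms that unfolding nz_def by auto
    have b: "n H \<bullet> x1 > 0 \<longleftrightarrow> n H \<bullet> x2 > 0" using assms(3) that unfolding sgs_def by blast
    have e: "n H \<bullet> ((1 - s) *\<^sub>R x1 + s *\<^sub>R x2) = (1 - s) * (n H \<bullet> x1) + s * (n H \<bullet> x2)"
      by (simp add: inner_add_right)
    show ?thesis
    proof (cases "n H \<bullet> x1 > 0")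
      case True
      then have "n H \<bullet> x2 > 0" using b by auto
      then have "(1 - s) * (n H \<bullet> x1) + s * (n H \<bullet> x2) > 0" using True assms(4,5)
        by (smt (verit) mult_nonneg_nonneg mult_pos_pos)
      then show ?thesis using e True by auto
    next
      case False
      then have "n H \<bullet> x1 < 0" "n H \<bullet> x2 < 0" using a b by auto
      then have "(1 - s) * (n H \<bullet> x1) + s * (n H \<bullet> x2) < 0" using assms(4,5)
        by (smt (verit) mult_nonneg_nonpos mult_pos_neg)
      then show ?thesis using e \<open>n H \<bullet> x1 < 0\<close> by auto
    qed
  qed
  have "nz n A ((1 - s) *\<^sub>R x1 + s *\<^sub>R x2)" unfolding nz_def
  proof
    fix H assume "H \<in> A" then show "n H \<bullet> ((1 - s) *\<^sub>R x1 + s *\<^sub>R x2) \<noteq> 0" using *[of H] by linarith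
  qed
  moreover have "sgs n A ((1 - s) *\<^sub>R x1 + s *\<^sub>R x2) = sgs n A x1" unfolding sgs_def
  proof (rule set_eqI)
    fix H show "H \<in> {H \<in> A. 0 < n H \<bullet> ((1 - s) *\<^sub>R x1 + s *\<^sub>R x2)} \<longleftrightarrow> H \<in> {H \<in> A. 0 < n H \<bullet> x1}"
      using *[of H] by auto
  qed
  ultimately show ?thesis by simp
qed

lemma fS_upper:
  assumes "finite A0" "H \<notin> A0" "subspace M"
  shows "card (fS n (insert H A0) M) \<le> card (fS n A0 M) + card (fS n A0 (M \<inter> hp n H))"
proof -
  let ?F = "fS n (insert H A0) M"
  let ?r = "\<lambda>P. P - {H}"
  let ?F1 = "?r ` {P\<in>?F. H \<notin> P}" and ?F2 = "?r ` {P\<in>?F. H \<in> P}"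
  have eq: "card ?F = card (?F1 \<union> ?F2) + card (?F1 \<inter> ?F2)"
    using card_split[OF assms(1,2) fS_sub] .
  have s1: "?F1 \<union> ?F2 \<subseteq> fS n A0 M"
  proof
    fix Q assume "Q \<in> ?F1 \<union> ?F2"
    then obtain P where P: "P \<in> ?F" "Q = P - {H}" by blast
    obtain x where x: "x \<in> M" "nz n (insert H A0) x" "P = sgs n (insert H A0) x"
      using fS_memE[OF P(1)] by blast
    have "Q = sgs n A0 x" using P(2) x(3) sgs_del[OF assms(2)] by simp
    then show "Q \<in> fS n A0 M" using fS_memI[OF x(1) nz_del[OF x(2)]] by simp
  qed
  have s2: "?F1 \<inter> ?F2 \<subseteq> fS n A0 (M \<inter> hp n H)"
  proof
    fix Q assume "Q \<in> ?F1 \<inter> ?F2"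
    then obtain P1 P2 where P: "P1 \<in> ?F" "H \<notin> P1" "Q = P1 - {H}" "P2 \<in> ?F" "H \<in> P2" "Q = P2 - {H}"
      by blast
    obtain x1 where x1: "x1 \<in> M" "nz n (insert H A0) x1" "P1 = sgs n (insert H A0) x1"
      using P(1) unfolding fS_def by blast
    obtain x2 where x2: "x2 \<in> M" "nz n (insert H A0) x2" "P2 = sgs n (insert H A0) x2"
      using P(4) unfolding fS_def by blast
    define a where "a = n H \<bullet> x1"
    define b where "b = n H \<bullet> x2"
    have "a \<noteq> 0" using x1(2) unfolding a_def nz_def by simp
    moreover have "\<not> a > 0" using x1(3) P(2) unfolding a_def sgs_def by simp
    ultimately have a: "a < 0" by simp
    have b: "b > 0" using x2(3) P(5) unfolding b_def sgs_def by simp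
    define s where "s = a / (a - b)"
    have s: "0 \<le> s" "s \<le> 1" using a b unfolding s_def by (simp_all add: divide_simps)
    define z where "z = (1 - s) *\<^sub>R x1 + s *\<^sub>R x2"
    have "n H \<bullet> z = (1 - s) * a + s * b" unfolding z_def a_def b_def by (simp add: inner_add_right)
    also have "\<dots> = a + s * (b - a)" by (simp add: algebra_simps)
    also have "s * (b - a) = - a" unfolding s_def using a b by (simp add: divide_simps algebra_simps)
    finally have zH: "z \<in> hp n H" unfolding hp_def by simp
    have zM: "z \<in> M" unfolding z_def using x1(1) x2(1) assms(3)
      by (simp add: subspace_add subspace_scale)
    have q1: "sgs n A0 x1 = Q" "sgs n A0 x2 = Q" using P(3,6) x1(3) x2(3) sgs_del[OF assms(2)] by auto
    have c: "nz n A0 z \<and> sgs n A0 z = sgs n A0 x1"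
      unfolding z_def by (rule convex_comb_sgs[OF nz_del[OF x1(2)] nz_del[OF x2(2)] _ s]) (use q1 in simp)
    have "Q = sgs n A0 z" using c q1 by simp
    moreover have "z \<in> M \<inter> hp n H" using zH zM by simp
    ultimately show "Q \<in> fS n A0 (M \<inter> hp n H)" unfolding fS_def using c by blast
  qed
  have "card (?F1 \<union> ?F2) \<le> card (fS n A0 M)" by (rule card_mono[OF fS_fin[OF assms(1)] s1])
  moreover have "card (?F1 \<inter> ?F2) \<le> card (fS n A0 (M \<inter> hp n H))" by (rule card_mono[OF fS_fin[OF assms(1)] s2])
  ultimately show ?thesis using eq by linarith
qed

lemma ext_point:
  assumes "finite A0" "H \<notin> A0" "nz n A0 y" "nz n (insert H A0) w"
  shows "\<exists>t>0. nz n (insert H A0) (y + t *\<^sub>R w) \<and> sgs n (insert H A0) (y + t *\<^sub>R w) - {H} = sgs n A0 y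
    \<and> (n H \<bullet> y = 0 \<longrightarrow> (H \<in> sgs n (insert H A0) (y + t *\<^sub>R w) \<longleftrightarrow> n H \<bullet> w > 0))"
proof -
  obtain t where t: "t > 0" "nz n (insert H A0) (y + t *\<^sub>R w)"
    "sgs n (insert H A0) (y + t *\<^sub>R w) = {H'\<in>insert H A0. n H' \<bullet> y > 0 \<or> (n H' \<bullet> y = 0 \<and> n H' \<bullet> w > 0)}"
    using perturb_sgs[of "insert H A0" n w y] assms by auto
  have "sgs n (insert H A0) (y + t *\<^sub>R w) - {H} = sgs n A0 y"
    using t(3) assms(2,3) unfolding sgs_def nz_def by auto
  then show ?thesis using t by (intro exI[of _ t]) auto
qed

lemma fS_lower:
  assumes "finite A0" "H \<notin> A0" "subspace M" "\<forall>H'\<in>insert H A0. \<not> M \<subseteq> hp n H'"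
  shows "card (fS n A0 M) + card (fS n A0 (M \<inter> hp n H)) \<le> card (fS n (insert H A0) M)"
proof -
  let ?F = "fS n (insert H A0) M"
  let ?r = "\<lambda>P. P - {H}"
  let ?F1 = "?r ` {P\<in>?F. H \<notin> P}" and ?F2 = "?r ` {P\<in>?F. H \<in> P}"
  have eq: "card ?F = card (?F1 \<union> ?F2) + card (?F1 \<inter> ?F2)"
    using card_split[OF assms(1,2) fS_sub] .
  obtain w where w: "w \<in> M" "nz n (insert H A0) w"
    using generic_vec[OF assms(3) _ assms(4)] assms(1) by auto
  have wm: "nz n (insert H A0) (-w)" "- w \<in> M" using w assms(3) unfolding nz_def
    by (auto simp: subspace_neg)
  have inF: "sgs n (insert H A0) (y + t *\<^sub>R v) \<in> ?F" if "y \<in> M" "v \<in> M" "nz n (insert H A0) (y + t *\<^sub>R v)" for y v t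
    using that assms(3) by (intro fS_memI) (auto simp: subspace_add subspace_scale)
  have s1: "fS n A0 M \<subseteq> ?F1 \<union> ?F2"
  proof
    fix Q assume "Q \<in> fS n A0 M"
    then obtain y where y: "y \<in> M" "nz n A0 y" "Q = sgs n A0 y" using fS_memE by blast
    obtain t where t: "nz n (insert H A0) (y + t *\<^sub>R w)" "sgs n (insert H A0) (y + t *\<^sub>R w) - {H} = Q"
      using ext_point[OF assms(1,2) y(2) w(2)] y(3) by auto
    have "sgs n (insert H A0) (y + t *\<^sub>R w) \<in> ?F" using inF y(1) w(1) t(1) by auto
    then show "Q \<in> ?F1 \<union> ?F2" using t(2) split_mem1[of _ ?F H Q] split_mem2[of _ ?F H Q]
      by (cases "H \<in> sgs n (insert H A0) (y + t *\<^sub>R w)") blast+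
  qed
  have s2: "fS n A0 (M \<inter> hp n H) \<subseteq> ?F1 \<inter> ?F2"
  proof
    fix Q assume "Q \<in> fS n A0 (M \<inter> hp n H)"
    then obtain y where y: "y \<in> M" "n H \<bullet> y = 0" "nz n A0 y" "Q = sgs n A0 y" using fS_memE[of Q] unfolding hp_def by blast
    obtain t where t: "nz n (insert H A0) (y + t *\<^sub>R w)" "sgs n (insert H A0) (y + t *\<^sub>R w) - {H} = Q"
        "H \<in> sgs n (insert H A0) (y + t *\<^sub>R w) \<longleftrightarrow> n H \<bullet> w > 0"
      using ext_point[OF assms(1,2) y(3) w(2)] y by auto
    obtain t' where t': "nz n (insert H A0) (y + t' *\<^sub>R (-w))" "sgs n (insert H A0) (y + t' *\<^sub>R (-w)) - {H} = Q"
        "H \<in> sgs n (insert H A0) (y + t' *\<^sub>R (-w)) \<longleftrightarrow> n H \<bullet> (-w) > 0"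
      using ext_point[OF assms(1,2) y(3) wm(1)] y by auto
    have p1: "sgs n (insert H A0) (y + t *\<^sub>R w) \<in> ?F" using inF y(1) w(1) t(1) by auto
    have p2: "sgs n (insert H A0) (y + t' *\<^sub>R (-w)) \<in> ?F" using inF[OF y(1) wm(2) t'(1)] .
    have "n H \<bullet> w \<noteq> 0" using w(2) unfolding nz_def by auto
    then show "Q \<in> ?F1 \<inter> ?F2"
    proof (cases "n H \<bullet> w > 0")
      case True
      then have "H \<in> sgs n (insert H A0) (y + t *\<^sub>R w)" "H \<notin> sgs n (insert H A0) (y + t' *\<^sub>R (-w))"
        using t(3) t'(3) by auto
      then show ?thesis using split_mem1[OF p2 _ t'(2)] split_mem2[OF p1 _ t(2)] by blast
    next
      case False
      then have "n H \<bullet> (-w) > 0" using \<open>n H \<bullet> w \<noteq> 0\<close> by auto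
      then have "H \<notin> sgs n (insert H A0) (y + t *\<^sub>R w)" "H \<in> sgs n (insert H A0) (y + t' *\<^sub>R (-w))"
        using t(3) t'(3) False by auto
      then show ?thesis using split_mem1[OF p1 _ t(2)] split_mem2[OF p2 _ t'(2)] by blast
    qed
  qed
  have fin: "finite ?F" using fS_fin assms(1) by blast
  have "card (fS n A0 M) \<le> card (?F1 \<union> ?F2)" by (rule card_mono) (use fin s1 in auto)
  moreover have "card (fS n A0 (M \<inter> hp n H)) \<le> card (?F1 \<inter> ?F2)" by (rule card_mono) (use fin s2 in auto)
  ultimately show ?thesis using eq by linarith
qed

lemma G_point:
  assumes "finite A0" "H \<notin> A0" "subspace V" "y \<in> V" "nz n A0 y" "M' \<subseteq> V" "x \<in> M'" "x \<noteq> 0"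
    "wk n A0 (sgs n A0 y) x" "w \<in> V" "nz n (insert H A0) w"
  shows "\<exists>P\<in>gS n V (insert H A0) M'. P - {H} = sgs n A0 y \<and>
     (n H \<bullet> y = 0 \<longrightarrow> n H \<bullet> x = 0 \<longrightarrow> (H \<in> P \<longleftrightarrow> n H \<bullet> w > 0))"
proof -
  let ?A = "insert H A0"
  obtain t where t: "nz n ?A (y + t *\<^sub>R w)" "sgs n ?A (y + t *\<^sub>R w) - {H} = sgs n A0 y"
      "n H \<bullet> y = 0 \<longrightarrow> (H \<in> sgs n ?A (y + t *\<^sub>R w) \<longleftrightarrow> n H \<bullet> w > 0)"
    using ext_point[OF assms(1,2,5,11)] by auto
  define z where "z = y + t *\<^sub>R w"
  have zV: "z \<in> V" unfolding z_def using assms(3,4,10) by (simp add: subspace_add subspace_scale)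
  have fin: "finite ?A" using assms(1) by auto
  obtain t2 where t2: "nz n ?A (x + t2 *\<^sub>R z)"
     "sgs n ?A (x + t2 *\<^sub>R z) = {H'\<in>?A. n H' \<bullet> x > 0 \<or> (n H' \<bullet> x = 0 \<and> n H' \<bullet> z > 0)}"
    using perturb_sgs[OF fin t(1)[folded z_def], of x] by auto
  define P where "P = sgs n ?A (x + t2 *\<^sub>R z)"
  have xV: "x \<in> V" using assms(6,7) by auto
  have z2V: "x + t2 *\<^sub>R z \<in> V" using xV zV assms(3) by (simp add: subspace_add subspace_scale)
  have wkP: "wk n ?A P x" unfolding wk_def P_def t2(2) by auto
  have PG: "P \<in> gS n V ?A M'" unfolding gS_def P_def using z2V t2(1) wkP[unfolded P_def] assms(7,8) by blast
  have "P - {H} = sgs n A0 y"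
  proof -
    have "H' \<in> P \<longleftrightarrow> H' \<in> sgs n A0 y" if "H' \<in> A0" for H'
    proof -
      have zz: "H' \<in> sgs n A0 y \<longleftrightarrow> n H' \<bullet> z > 0"
        using t(2) that assms(2) unfolding z_def sgs_def by blast
      have "H' \<in> sgs n A0 y \<Longrightarrow> n H' \<bullet> x \<ge> 0" "H' \<notin> sgs n A0 y \<Longrightarrow> n H' \<bullet> x \<le> 0"
        using assms(9) that unfolding wk_def by auto
      then show ?thesis unfolding P_def t2(2) using zz that by auto
    qed
    moreover have "P \<subseteq> ?A" unfolding P_def sgs_def by auto
    moreover have "sgs n A0 y \<subseteq> A0" unfolding sgs_def by auto
    ultimately show ?thesis using assms(2) by blast
  qed
  moreover have "n H \<bullet> y = 0 \<longrightarrow> n H \<bullet> x = 0 \<longrightarrow> (H \<in> P \<longleftrightarrow> n H \<bullet> w > 0)"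
  proof (intro impI)
    assume "n H \<bullet> y = 0" "n H \<bullet> x = 0"
    have "H \<in> P \<longleftrightarrow> n H \<bullet> z > 0" unfolding P_def t2(2) using \<open>n H \<bullet> x = 0\<close> by auto
    also have "\<dots> \<longleftrightarrow> H \<in> sgs n ?A z" unfolding sgs_def by auto
    also have "\<dots> \<longleftrightarrow> n H \<bullet> w > 0" using t(3) \<open>n H \<bullet> y = 0\<close> unfolding z_def by auto
    finally show "H \<in> P \<longleftrightarrow> n H \<bullet> w > 0" .
  qed
  ultimately show ?thesis using PG by blast
qed

lemma gS_lower:
  assumes "finite A0" "H \<notin> A0" "subspace V" "M' \<subseteq> V" "\<forall>H'\<in>insert H A0. \<not> V \<subseteq> hp n H'"
  shows "card (gS n V A0 M') + card (gS n (V \<inter> hp n H) A0 (M' \<inter> hp n H)) \<le> card (gS n V (insert H A0) M')"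
proof -
  let ?F = "gS n V (insert H A0) M'"
  let ?r = "\<lambda>P. P - {H}"
  let ?F1 = "?r ` {P\<in>?F. H \<notin> P}" and ?F2 = "?r ` {P\<in>?F. H \<in> P}"
  have eq: "card ?F = card (?F1 \<union> ?F2) + card (?F1 \<inter> ?F2)"
    using card_split[OF assms(1,2) gS_sub] .
  obtain w where w: "w \<in> V" "nz n (insert H A0) w"
    using generic_vec[OF assms(3) _ assms(5)] assms(1) by auto
  have wm: "nz n (insert H A0) (-w)" "- w \<in> V" using w assms(3) unfolding nz_def
    by (auto simp: subspace_neg)
  have s1: "gS n V A0 M' \<subseteq> ?F1 \<union> ?F2"
  proof
    fix Q assume "Q \<in> gS n V A0 M'"
    then obtain y x where y: "y \<in> V" "nz n A0 y" "Q = sgs n A0 y" "x \<in> M'" "x \<noteq> 0" "wk n A0 Q x"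
      unfolding gS_def by auto
    obtain P where "P \<in> ?F" "P - {H} = Q"
      using G_point[OF assms(1,2,3) y(1,2) assms(4) y(4,5) y(6)[unfolded y(3)] w] y(3) by auto
    then show "Q \<in> ?F1 \<union> ?F2" using split_mem1[of P ?F H Q] split_mem2[of P ?F H Q] by blast
  qed
  have s2: "gS n (V \<inter> hp n H) A0 (M' \<inter> hp n H) \<subseteq> ?F1 \<inter> ?F2"
  proof
    fix Q assume "Q \<in> gS n (V \<inter> hp n H) A0 (M' \<inter> hp n H)"
    then obtain y x where y: "y \<in> V" "nz n A0 y" "Q = sgs n A0 y" "x \<in> M'" "x \<noteq> 0" "wk n A0 Q x"
       "n H \<bullet> y = 0" "n H \<bullet> x = 0"
      unfolding gS_def hp_def by auto
    obtain P1 where P1: "P1 \<in> ?F" "P1 - {H} = Q" "H \<in> P1 \<longleftrightarrow> n H \<bullet> w > 0"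
      using G_point[OF assms(1,2,3) y(1,2) assms(4) y(4,5) y(6)[unfolded y(3)] w] y by auto
    obtain P2 where P2: "P2 \<in> ?F" "P2 - {H} = Q" "H \<in> P2 \<longleftrightarrow> n H \<bullet> (-w) > 0"
      using G_point[OF assms(1,2,3) y(1,2) assms(4) y(4,5) y(6)[unfolded y(3)] wm(2,1)] y by auto
    have "n H \<bullet> w \<noteq> 0" using w(2) unfolding nz_def by auto
    then show "Q \<in> ?F1 \<inter> ?F2"
    proof (cases "n H \<bullet> w > 0")
      case True
      then show ?thesis using P1 P2 split_mem1[OF P2(1) _ P2(2)] split_mem2[OF P1(1) _ P1(2)] by auto
    next
      case False
      then have "n H \<bullet> (-w) > 0" using \<open>n H \<bullet> w \<noteq> 0\<close> by auto
      then show ?thesis using P1 P2 False split_mem1[OF P1(1) _ P1(2)] split_mem2[OF P2(1) _ P2(2)] by auto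
    qed
  qed
  have fin: "finite ?F" using gS_fin assms(1) by blast
  have "card (gS n V A0 M') \<le> card (?F1 \<union> ?F2)" by (rule card_mono) (use fin s1 in auto)
  moreover have "card (gS n (V \<inter> hp n H) A0 (M' \<inter> hp n H)) \<le> card (?F1 \<inter> ?F2)" by (rule card_mono) (use fin s2 in auto)
  ultimately show ?thesis using eq by linarith
qed

lemma subspace_hp: "subspace (hp n H)" unfolding hp_def by (rule subspace_hyperplane)

lemma dim_hp_sect:
  assumes "subspace V" "\<not> V \<subseteq> hp n H"
  shows "dim (V \<inter> hp n H) = dim V - 1 \<and> dim V \<ge> 1"
proof -
  have a: "n H \<noteq> 0" using assms(2) unfolding hp_def by auto
  have dh: "dim (hp n H) = DIM('a) - 1" unfolding hp_def using dim_hyperplane[OF a] .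
  obtain v where v: "v \<in> V" "v \<notin> hp n H" using assms(2) by auto
  let ?S = "{x + y |x y. x \<in> V \<and> y \<in> hp n H}"
  have sub: "subspace ?S" by (rule subspace_sums[OF assms(1) subspace_hp])
  have "hp n H \<subseteq> ?S"
  proof
    fix y assume "y \<in> hp n H"
    then show "y \<in> ?S" using subspace_0[OF assms(1)] by (intro CollectI exI[of _ 0] exI[of _ y]) simp
  qed
  moreover have "v \<in> ?S" using v subspace_0[OF subspace_hp] by (intro CollectI exI[of _ v] exI[of _ 0]) simp
  ultimately have "hp n H \<subset> ?S" using v by blast
  moreover have "span (hp n H) = hp n H" by (rule span_eq_iff[THEN iffD2, OF subspace_hp])
  moreover have "span ?S = ?S" by (rule span_eq_iff[THEN iffD2, OF sub])
  ultimately have "span (hp n H) \<subset> span ?S" by (simp only:)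
  then have "dim (hp n H) < dim ?S" by (rule dim_psubset)
  moreover have "dim ?S \<le> DIM('a)" by (rule dim_subset_UNIV)
  ultimately have dS: "dim ?S = DIM('a)" using dh by linarith
  have "dim ?S + dim (V \<inter> hp n H) = dim V + dim (hp n H)"
    by (rule dim_sums_Int[OF assms(1) subspace_hp])
  moreover have "DIM('a) \<ge> 1" using DIM_positive by (simp only: Suc_le_eq One_nat_def)
  ultimately show ?thesis using dS dh by linarith
qed

lemma dim_sect_ge:
  assumes "subspace M"
  shows "dim (M \<inter> hp n H) \<ge> dim M - 1"
proof (cases "M \<subseteq> hp n H")
  case True then show ?thesis by (simp add: Int_absorb2)
next
  case False then show ?thesis using dim_hp_sect[OF assms False] by simp
qed

lemma genD: "gen n V A M \<Longrightarrow> B \<noteq> {} \<Longrightarrow> B \<subseteq> A \<Longrightarrow>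
   dim (\<Inter>(hp n ` B) \<inter> M) = dim M - (dim V - dim (\<Inter>(hp n ` B) \<inter> V))"
  unfolding gen_def by blast

lemma gen_mono: "gen n V A M \<Longrightarrow> A0 \<subseteq> A \<Longrightarrow> gen n V A0 M"
  unfolding gen_def by blast

lemma gen_single:
  assumes "gen n V A M" "H \<in> A" "subspace V" "\<not> V \<subseteq> hp n H" "dim M \<ge> 1"
  shows "dim (M \<inter> hp n H) = dim M - 1 \<and> \<not> M \<subseteq> hp n H"
proof -
  have "{H} \<noteq> {} \<and> {H} \<subseteq> A" using assms(2) by simp
  then have "dim (\<Inter>(hp n ` {H}) \<inter> M) = dim M - (dim V - dim (\<Inter>(hp n ` {H}) \<inter> V))"
    using genD[OF assms(1)] by blast
  moreover have "\<Inter>(hp n ` {H}) \<inter> M = M \<inter> hp n H" "\<Inter>(hp n ` {H}) \<inter> V = V \<inter> hp n H" by auto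
  ultimately have "dim (M \<inter> hp n H) = dim M - (dim V - dim (V \<inter> hp n H))" by simp
  then have e: "dim (M \<inter> hp n H) = dim M - 1" using dim_hp_sect[OF assms(3,4)] by simp
  moreover have "\<not> M \<subseteq> hp n H"
  proof
    assume "M \<subseteq> hp n H"
    then have "M \<inter> hp n H = M" by blast
    then show False using e assms(5) by simp
  qed
  ultimately show ?thesis by simp
qed

lemma gen_sect:
  assumes "gen n V (insert H A0) M" "subspace V" "\<not> V \<subseteq> hp n H" "dim M \<ge> 1"
  shows "gen n (V \<inter> hp n H) A0 (M \<inter> hp n H)"
  unfolding gen_def
proof (intro allI impI)
  fix B assume B: "B \<noteq> {} \<and> B \<subseteq> A0"
  have dM: "dim (M \<inter> hp n H) = dim M - 1" using gen_single[OF assms(1) _ assms(2-4)] by auto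
  have dV: "dim (V \<inter> hp n H) = dim V - 1" "dim V \<ge> 1" using dim_hp_sect[OF assms(2,3)] by auto
  have ins: "insert H B \<subseteq> insert H A0" using B by blast
  have g: "dim (\<Inter>(hp n ` insert H B) \<inter> M) = dim M - (dim V - dim (\<Inter>(hp n ` insert H B) \<inter> V))"
    by (rule genD[OF assms(1) _ ins]) simp
  have e1: "\<Inter>(hp n ` insert H B) \<inter> M = \<Inter>(hp n ` B) \<inter> (M \<inter> hp n H)" by blast
  have e2: "\<Inter>(hp n ` insert H B) \<inter> V = \<Inter>(hp n ` B) \<inter> (V \<inter> hp n H)" by blast
  have le: "dim (\<Inter>(hp n ` B) \<inter> (V \<inter> hp n H)) \<le> dim (V \<inter> hp n H)" by (rule dim_subset) auto
  have g': "dim (\<Inter>(hp n ` B) \<inter> (M \<inter> hp n H)) = dim M - (dim V - dim (\<Inter>(hp n ` B) \<inter> (V \<inter> hp n H)))"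
    using g unfolding e1 e2 .
  show "dim (\<Inter>(hp n ` B) \<inter> (M \<inter> hp n H)) =
      dim (M \<inter> hp n H) - (dim (V \<inter> hp n H) - dim (\<Inter>(hp n ` B) \<inter> (V \<inter> hp n H)))"
    unfolding g' dM dV(1) using le dV assms(4) by linarith
qed

lemma fS_empty: "0 \<in> X \<Longrightarrow> fS n {} X = {{}}"
proof -
  assume "0 \<in> X"
  have "fS n {} X \<subseteq> {{}}" using fS_sub[of n "{}" X] by auto
  moreover have "sgs n {} 0 \<in> fS n {} X" by (rule fS_memI[OF \<open>0 \<in> X\<close>]) (simp add: nz_def)
  moreover have "sgs n {} 0 = {}" by (simp add: sgs_def)
  ultimately show ?thesis by auto
qed

lemma fS_zero: "H \<in> A \<Longrightarrow> M \<subseteq> hp n H \<Longrightarrow> fS n A M = {}"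
  using fS_memE[of _ n A M] unfolding nz_def hp_def by blast

lemma claim3_gen:
  fixes n :: "'b \<Rightarrow> 'a::euclidean_space"
  assumes "finite A"
  shows "\<forall>V M M'. subspace V \<longrightarrow> subspace M \<longrightarrow> subspace M' \<longrightarrow> M \<subseteq> V \<longrightarrow> M' \<subseteq> V \<longrightarrow>
     dim M = dim M' \<longrightarrow> gen n V A M \<longrightarrow> card (fS n A M') \<le> card (fS n A M)"
  using assms
proof (induction A rule: finite_induct)
  case empty
  show ?case
  proof (intro allI impI)
    fix V M M' :: "'a set" assume "subspace V" "subspace M" "subspace M'"
    have "fS n {} M = {{}}" by (rule fS_empty) (rule subspace_0[OF \<open>subspace M\<close>])
    moreover have "fS n {} M' = {{}}" by (rule fS_empty) (rule subspace_0[OF \<open>subspace M'\<close>])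
    ultimately show "card (fS n {} M') \<le> card (fS n {} M)" by simp
  qed
next
  case (insert H A0)
  show ?case
  proof (intro allI impI)
    fix V M M' :: "'a set" 
    assume V: "subspace V" and M: "subspace M" and M': "subspace M'" and MV: "M \<subseteq> V" and M'V: "M' \<subseteq> V"
      and d: "dim M = dim M'" and g: "gen n V (insert H A0) M"
    show "card (fS n (insert H A0) M') \<le> card (fS n (insert H A0) M)"
    proof (cases "\<exists>H'\<in>insert H A0. M' \<subseteq> hp n H'")
      case True
      then obtain H' where "H' \<in> insert H A0" "M' \<subseteq> hp n H'" by blast
      then have "fS n (insert H A0) M' = {}" by (rule fS_zero)
      then show ?thesis by simp
    next
      case False
      have k: "dim M' \<ge> 1"
      proof (rule ccontr)
        assume "\<not> 1 \<le> dim M'"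
        then have "dim M' = 0" by linarith
        then have "M' \<subseteq> {0}" using dim_eq_0 by blast
        then have "M' \<subseteq> hp n H" unfolding hp_def by auto
        then show False using False by auto
      qed
      have nV: "\<forall>H'\<in>insert H A0. \<not> V \<subseteq> hp n H'"
      proof
        fix H' assume "H' \<in> insert H A0"
        then have "\<not> M' \<subseteq> hp n H'" using False by blast
        then show "\<not> V \<subseteq> hp n H'" using M'V by (meson order_trans)
      qed
      have kM: "dim M \<ge> 1" using k d by simp
      have nM: "\<forall>H'\<in>insert H A0. \<not> M \<subseteq> hp n H'"
      proof
        fix H' assume H': "H' \<in> insert H A0"
        have "\<not> V \<subseteq> hp n H'" using nV H' by blast
        then show "\<not> M \<subseteq> hp n H'" using gen_single[OF g H' V _ kM] by blast
      qed
      have nVH: "\<not> V \<subseteq> hp n H" using nV by blast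
      have dM: "dim (M \<inter> hp n H) = dim M - 1" using gen_single[OF g _ V nVH kM] by blast
      have dM': "dim (M' \<inter> hp n H) = dim M' - 1"
      proof -
        have "\<not> M' \<subseteq> hp n H" using False by simp
        from dim_hp_sect[OF M' this] show ?thesis by simp
      qed
      have u: "card (fS n (insert H A0) M') \<le> card (fS n A0 M') + card (fS n A0 (M' \<inter> hp n H))"
        by (rule fS_upper[OF insert.hyps(1,2) M'])
      have i1: "card (fS n A0 M') \<le> card (fS n A0 M)"
        by (rule insert.IH[rule_format, OF V M M' MV M'V d gen_mono[OF g subset_insertI]])
      have i2: "card (fS n A0 (M' \<inter> hp n H)) \<le> card (fS n A0 (M \<inter> hp n H))"
      proof -
        have G: "gen n (V \<inter> hp n H) A0 (M \<inter> hp n H)" using gen_sect[OF g V nVH kM] .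
        have S: "subspace (V \<inter> hp n H)" "subspace (M \<inter> hp n H)" "subspace (M' \<inter> hp n H)"
          using subspace_inter[OF V subspace_hp[of n H]] subspace_inter[OF M subspace_hp[of n H]]
            subspace_inter[OF M' subspace_hp[of n H]] by auto
        have D: "dim (M \<inter> hp n H) = dim (M' \<inter> hp n H)" using dM dM' d by simp
        have I: "M \<inter> hp n H \<subseteq> V \<inter> hp n H" "M' \<inter> hp n H \<subseteq> V \<inter> hp n H" using MV M'V by auto
        show ?thesis by (rule insert.IH[rule_format, OF S I D G])
      qed
      have l: "card (fS n A0 M) + card (fS n A0 (M \<inter> hp n H)) \<le> card (fS n (insert H A0) M)"
        by (rule fS_lower[OF insert.hyps(1,2) M nM])
      show ?thesis using u i1 i2 l by linarith
    qed
  qed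
qed

lemma gS_two:
  assumes "finite A" "H0 \<in> A" "subspace V" "M' \<subseteq> V" "v \<in> M'" "v \<noteq> 0" "subspace M'"
    "\<forall>H\<in>A. \<not> V \<subseteq> hp n H"
  shows "card (gS n V A M') \<ge> 2"
proof -
  obtain w where w: "w \<in> V" "nz n A w" using generic_vec[OF assms(3,1,8)] by auto
  have wm: "nz n A (-w)" using w(2) unfolding nz_def by auto
  obtain t1 where t1: "nz n A (v + t1 *\<^sub>R w)"
    "sgs n A (v + t1 *\<^sub>R w) = {H\<in>A. n H \<bullet> v > 0 \<or> (n H \<bullet> v = 0 \<and> n H \<bullet> w > 0)}"
    using perturb_sgs[OF assms(1) w(2), of v] by auto
  obtain t2 where t2: "nz n A (-v + t2 *\<^sub>R (-w))"
    "sgs n A (-v + t2 *\<^sub>R (-w)) = {H\<in>A. n H \<bullet> (-v) > 0 \<or> (n H \<bullet> (-v) = 0 \<and> n H \<bullet> (-w) > 0)}"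
    using perturb_sgs[OF assms(1) wm, of "-v"] by auto
  have vV: "v \<in> V" "-v \<in> V" "-v \<in> M'" using assms(4,5,7) subspace_neg[OF assms(7)] by auto
  have p1: "v + t1 *\<^sub>R w \<in> V" using vV w assms(3) by (simp add: subspace_add subspace_scale)
  have p2: "-v + t2 *\<^sub>R (-w) \<in> V" using vV w assms(3) by (simp add: subspace_add subspace_scale subspace_neg subspace_diff)
  let ?P1 = "sgs n A (v + t1 *\<^sub>R w)" and ?P2 = "sgs n A (-v + t2 *\<^sub>R (-w))"
  have wk1: "wk n A ?P1 v" unfolding wk_def t1(2) by auto
  have wk2: "wk n A ?P2 (-v)" unfolding wk_def t2(2) by auto
  have "?P1 \<in> gS n V A M'"
    unfolding gS_def using p1 t1(1) assms(5,6) wk1 by blast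
  moreover have "?P2 \<in> gS n V A M'"
  proof -
    have "-v \<noteq> 0" using assms(6) by simp
    then have "\<exists>x\<in>M'. x \<noteq> 0 \<and> wk n A ?P2 x" using vV(3) wk2 by blast
    then show ?thesis unfolding gS_def using p2 t2(1) by blast
  qed
  moreover have "?P1 \<noteq> ?P2"
  proof -
    have "n H0 \<bullet> w \<noteq> 0" using w(2) assms(2) unfolding nz_def by auto
    then have "H0 \<in> ?P1 \<longleftrightarrow> H0 \<notin> ?P2" unfolding t1(2) t2(2) using assms(2) by auto
    then show ?thesis by auto
  qed
  ultimately have "{?P1, ?P2} \<subseteq> gS n V A M'" "card {?P1, ?P2} = 2" by auto
  then show ?thesis using gS_fin[OF assms(1)] by (metis card_mono)
qed

lemma card_le1: "card (X :: 'b set set) \<le> 1" if "X \<subseteq> Pow {}"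
proof -
  have "X \<subseteq> {{}}" using that by auto
  then have "card X \<le> card {{}::'b set}" by (intro card_mono) auto
  then show ?thesis by simp
qed

lemma gS_mono: "M1 \<subseteq> M2 \<Longrightarrow> gS n V A M1 \<subseteq> gS n V A M2"
  unfolding gS_def by blast

lemma dim0D: "dim (S::'a::euclidean_space set) = 0 \<Longrightarrow> S \<subseteq> {0}"
  by (metis dim_eq_0)

lemma nonzero_of_dim: "dim (M::'a::euclidean_space set) \<ge> 1 \<Longrightarrow> \<exists>v\<in>M. v \<noteq> 0"
proof (rule ccontr)
  assume "dim M \<ge> 1" "\<not> (\<exists>v\<in>M. v \<noteq> 0)"
  then have "M \<subseteq> {0}" by blast
  then have "dim M = 0" using dim_eq_0 by blast
  then show False using \<open>dim M \<ge> 1\<close> by linarith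
qed

lemma claim2_gen:
  fixes n :: "'b \<Rightarrow> 'a::euclidean_space"
  assumes "finite A"
  shows "\<forall>V M M'. subspace V \<longrightarrow> subspace M \<longrightarrow> subspace M' \<longrightarrow> M \<subseteq> V \<longrightarrow> M' \<subseteq> V \<longrightarrow>
     dim M = dim M' \<longrightarrow> dim M \<ge> 1 \<longrightarrow> gen n V A M \<longrightarrow> card (fS n A M) \<le> card (gS n V A M')"
  using assms
proof (induction A rule: finite_induct)
  case empty
  show ?case
  proof (intro allI impI)
    fix V M M' :: "'a set"
    assume V: "subspace V" and M: "subspace M" and M': "subspace M'" and MV: "M \<subseteq> V" and M'V: "M' \<subseteq> V"
      and d: "dim M = dim M'" and k: "dim M \<ge> 1"
    obtain v where v: "v \<in> M'" "v \<noteq> 0" using nonzero_of_dim[of M'] k d by auto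
    have "{} \<in> gS n V {} M'" unfolding gS_def nz_def sgs_def wk_def using v subspace_0[OF V] by auto
    then have "gS n V {} M' \<noteq> {}" by blast
    then have "card (gS n V {} M') > 0" using gS_fin[of "{}" n V M'] by (simp add: card_gt_0_iff)
    then have "card (gS n V {} M') \<ge> 1" by simp
    moreover have "fS n {} M = {{}}" by (rule fS_empty) (rule subspace_0[OF M])
    ultimately show "card (fS n {} M) \<le> card (gS n V {} M')" by simp
  qed
next
  case (insert H A0)
  show ?case
  proof (intro allI impI)
    fix V M M' :: "'a set"
    assume V: "subspace V" and M: "subspace M" and M': "subspace M'" and MV: "M \<subseteq> V" and M'V: "M' \<subseteq> V"
      and d: "dim M = dim M'" and k: "dim M \<ge> 1" and g: "gen n V (insert H A0) M"
    show "card (fS n (insert H A0) M) \<le> card (gS n V (insert H A0) M')"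
    proof (cases "\<exists>H'\<in>insert H A0. V \<subseteq> hp n H'")
      case True
      then obtain H' where H': "H' \<in> insert H A0" "V \<subseteq> hp n H'" by blast
      then have "M \<subseteq> hp n H'" using MV by blast
      then have "fS n (insert H A0) M = {}" using fS_zero[OF H'(1)] by blast
      then show ?thesis by simp
    next
      case False
      have nV: "\<forall>H'\<in>insert H A0. \<not> V \<subseteq> hp n H'" using False by blast
      have nVH: "\<not> V \<subseteq> hp n H" using False by blast
      have dM: "dim (M \<inter> hp n H) = dim M - 1" using gen_single[OF g _ V nVH k] by blast
      have dM': "dim (M' \<inter> hp n H) \<ge> dim M' - 1" using dim_sect_ge[OF M'] .
      have IH1: "card (fS n A0 M) \<le> card (gS n V A0 M')"
        by (rule insert.IH[rule_format, OF V M M' MV M'V d k gen_mono[OF g subset_insertI]])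
      have up: "card (fS n (insert H A0) M) \<le> card (fS n A0 M) + card (fS n A0 (M \<inter> hp n H))"
        by (rule fS_upper[OF insert.hyps(1,2) M])
      have low: "card (gS n V A0 M') + card (gS n (V \<inter> hp n H) A0 (M' \<inter> hp n H)) \<le> card (gS n V (insert H A0) M')"
        by (rule gS_lower[OF insert.hyps(1,2) V M'V nV])
      show ?thesis
      proof (cases "dim M \<ge> 2")
        case True
        have le: "dim M - 1 \<le> dim (M' \<inter> hp n H)" using dM' d by simp
        obtain M'' where M'': "subspace M''" "M'' \<subseteq> span (M' \<inter> hp n H)" "dim M'' = dim M - 1"
          using choose_subspace_of_subspace[OF le] by blast
        have sM'h: "subspace (M' \<inter> hp n H)" using subspace_inter[OF M' subspace_hp[of n H]] .
        have spe: "span (M' \<inter> hp n H) = M' \<inter> hp n H" by (rule span_eq_iff[THEN iffD2, OF sM'h])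
        have M''s: "M'' \<subseteq> M' \<inter> hp n H" using M''(2) unfolding spe .
        have c1: "card (fS n A0 (M \<inter> hp n H)) \<le> card (gS n (V \<inter> hp n H) A0 M'')"
        proof -
          have G: "gen n (V \<inter> hp n H) A0 (M \<inter> hp n H)" using gen_sect[OF g V nVH k] .
          have S1: "subspace (V \<inter> hp n H)" using subspace_inter[OF V subspace_hp[of n H]] .
          have S2: "subspace (M \<inter> hp n H)" using subspace_inter[OF M subspace_hp[of n H]] .
          have I1: "M'' \<subseteq> V \<inter> hp n H" using M''s M'V by auto
          have I2: "M \<inter> hp n H \<subseteq> V \<inter> hp n H" using MV by auto
          have D: "dim (M \<inter> hp n H) = dim M''" using M''(3) dM by simp
          have K: "dim (M \<inter> hp n H) \<ge> 1" using dM True by simp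
          show ?thesis by (rule insert.IH[rule_format, OF S1 S2 M''(1) I2 I1 D K G])
        qed
        have c2: "card (gS n (V \<inter> hp n H) A0 M'') \<le> card (gS n (V \<inter> hp n H) A0 (M' \<inter> hp n H))"
        proof (rule card_mono[OF gS_fin[OF insert.hyps(1)]])
          show "gS n (V \<inter> hp n H) A0 M'' \<subseteq> gS n (V \<inter> hp n H) A0 (M' \<inter> hp n H)"
            by (rule gS_mono[OF M''s])
        qed
        show ?thesis using up low IH1 c1 c2 by linarith
      next
        case False
        then have k1: "dim M = 1" using k by linarith
        then have "dim (M \<inter> hp n H) = 0" using dM by linarith
        then have M0: "M \<inter> hp n H \<subseteq> {0}" by (rule dim0D)
        show ?thesis
        proof (cases "A0 = {}")
          case True
          have c1: "card (fS n A0 M) \<le> 1" unfolding True by (rule card_le1[OF fS_sub])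
          have c2: "card (fS n A0 (M \<inter> hp n H)) \<le> 1" unfolding True by (rule card_le1[OF fS_sub])
          obtain v where v: "v \<in> M'" "v \<noteq> 0" using nonzero_of_dim[of M'] k d by auto
          have c3: "card (gS n V (insert H A0) M') \<ge> 2"
            by (rule gS_two[OF finite_insert[THEN iffD2, OF insert.hyps(1)] insertI1 V M'V v M' nV])
          show ?thesis using up c1 c2 c3 by linarith
        next
          case False
          then obtain H' where H': "H' \<in> A0" by auto
          moreover have "M \<inter> hp n H \<subseteq> hp n H'" using M0 unfolding hp_def by auto
          ultimately have "fS n A0 (M \<inter> hp n H) = {}" by (rule fS_zero)
          then have "card (fS n A0 (M \<inter> hp n H)) = 0" by (simp only: card.empty)
          then show ?thesis using up low IH1 by linarith
        qed
      qed
    qed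
  qed
qed



definition cell :: "('b \<Rightarrow> 'a::euclidean_space) \<Rightarrow> 'b set \<Rightarrow> 'b set \<Rightarrow> 'a set" where
  "cell n A P = {x. nz n A x \<and> sgs n A x = P}"

lemma notin_Union_iff:
  assumes "\<forall>H\<in>A. H = hp n H"
  shows "x \<notin> \<Union>A \<longleftrightarrow> nz n A x"
proof
  assume "x \<notin> \<Union>A"
  then show "nz n A x" unfolding nz_def using assms unfolding hp_def by blast
next
  assume "nz n A x"
  then show "x \<notin> \<Union>A" unfolding nz_def using assms unfolding hp_def by blast
qed

lemma convex_cell: "convex (cell n A P)"
  unfolding convex_alt
proof (intro ballI allI impI)
  fix x y and u :: real assume x: "x \<in> cell n A P" and y: "y \<in> cell n A P" and u: "0 \<le> u \<and> u \<le> 1"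
  have "nz n A ((1 - u) *\<^sub>R x + u *\<^sub>R y) \<and> sgs n A ((1 - u) *\<^sub>R x + u *\<^sub>R y) = sgs n A x"
    using x y u unfolding cell_def by (intro convex_comb_sgs) auto
  then show "(1 - u) *\<^sub>R x + u *\<^sub>R y \<in> cell n A P" using x unfolding cell_def by simp
qed

lemma component_cell:
  assumes "\<forall>H\<in>A. H = hp n H" "nz n A y"
  shows "connected_component_set (UNIV - \<Union>A) y = cell n A (sgs n A y)"
proof
  have yc: "y \<in> cell n A (sgs n A y)" using assms(2) unfolding cell_def by simp
  have sub: "cell n A (sgs n A y) \<subseteq> UNIV - \<Union>A"
    using notin_Union_iff[OF assms(1)] unfolding cell_def by blast
  show "cell n A (sgs n A y) \<subseteq> connected_component_set (UNIV - \<Union>A) y"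
    by (rule connected_component_maximal[OF yc convex_connected[OF convex_cell] sub])
next
  let ?C = "connected_component_set (UNIV - \<Union>A) y"
  show "?C \<subseteq> cell n A (sgs n A y)"
  proof
    fix z assume z: "z \<in> ?C"
    have Csub: "?C \<subseteq> UNIV - \<Union>A" by (rule connected_component_subset)
    have yC: "y \<in> ?C" using assms notin_Union_iff[OF assms(1)] by simp
    have nzC: "nz n A w" if "w \<in> ?C" for w using that Csub notin_Union_iff[OF assms(1)] by blast
    have "n H \<bullet> z > 0 \<longleftrightarrow> n H \<bullet> y > 0" if H: "H \<in> A" for H
    proof -
      have nzz: "n H \<bullet> z \<noteq> 0" using nzC[OF z] H unfolding nz_def by blast
      have nzy: "n H \<bullet> y \<noteq> 0" using assms(2) H unfolding nz_def by blast
      have no: False if pq: "p \<in> ?C" "q \<in> ?C" "n H \<bullet> p \<le> 0" "0 \<le> n H \<bullet> q" for p q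
      proof -
        obtain w where "w \<in> ?C" "n H \<bullet> w = 0"
          using connected_ivt_hyperplane[OF connected_connected_component pq] by blast
        then show False using nzC H unfolding nz_def by blast
      qed
      show ?thesis
      proof
        assume "n H \<bullet> z > 0"
        then show "n H \<bullet> y > 0" using no[OF yC z] nzy by force
      next
        assume "n H \<bullet> y > 0"
        then show "n H \<bullet> z > 0" using no[OF z yC] nzz by force
      qed
    qed
    then have "sgs n A z = sgs n A y" unfolding sgs_def by blast
    then show "z \<in> cell n A (sgs n A y)" unfolding cell_def using nzC[OF z] by simp
  qed
qed

lemma regions_eq:
  assumes "\<forall>H\<in>A. H = hp n H"
  shows "regions A = cell n A ` {sgs n A y | y. nz n A y}"
proof -
  have "regions A = {connected_component_set (UNIV - \<Union>A) y | y. y \<in> UNIV - \<Union>A}"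
    unfolding regions_def components_def by blast
  also have "\<dots> = {cell n A (sgs n A y) | y. nz n A y}"
    using component_cell[OF assms] notin_Union_iff[OF assms] by (metis (no_types, lifting) DiffD2 DiffI UNIV_I)
  finally show ?thesis by blast
qed

lemma inj_cell: "inj_on (cell n A) {sgs n A y | y. nz n A y}"
proof (rule inj_onI)
  fix P Q assume "P \<in> {sgs n A y | y. nz n A y}" "Q \<in> {sgs n A y | y. nz n A y}" "cell n A P = cell n A Q"
  then obtain y where y: "nz n A y" "P = sgs n A y" by blast
  then have "y \<in> cell n A P" unfolding cell_def by simp
  then have "y \<in> cell n A Q" using \<open>cell n A P = cell n A Q\<close> by simp
  then show "P = Q" using y unfolding cell_def by simp
qed

lemma closed_wk: "closed {x. wk n A P x}"
proof -
  have "{x. wk n A P x} = (\<Inter>H\<in>A \<inter> P. {x. n H \<bullet> x \<ge> 0}) \<inter> (\<Inter>H\<in>A - P. {x. n H \<bullet> x \<le> 0})"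
    unfolding wk_def by blast
  moreover have "closed ((\<Inter>H\<in>A \<inter> P. {x. n H \<bullet> x \<ge> 0}) \<inter> (\<Inter>H\<in>A - P. {x. n H \<bullet> x \<le> 0}))"
    by (intro closed_Int closed_INT ballI closed_halfspace_ge closed_halfspace_le)
  ultimately show ?thesis by simp
qed

lemma closure_cell:
  assumes "nz n A y0"
  shows "closure (cell n A (sgs n A y0)) = {x. wk n A (sgs n A y0) x}"
proof
  show "closure (cell n A (sgs n A y0)) \<subseteq> {x. wk n A (sgs n A y0) x}"
  proof (rule closure_minimal[OF _ closed_wk])
    show "cell n A (sgs n A y0) \<subseteq> {x. wk n A (sgs n A y0) x}"
    proof
      fix x assume "x \<in> cell n A (sgs n A y0)"
      then have x: "sgs n A x = sgs n A y0" unfolding cell_def by simp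
      have "wk n A (sgs n A x) x" unfolding wk_def sgs_def by auto
      then show "x \<in> {x. wk n A (sgs n A y0) x}" using x by simp
    qed
  qed
next
  let ?P = "sgs n A y0"
  show "{x. wk n A ?P x} \<subseteq> closure (cell n A ?P)"
  proof
    fix x assume "x \<in> {x. wk n A ?P x}"
    then have wx: "wk n A ?P x" by simp
    have inc: "x + t *\<^sub>R y0 \<in> cell n A ?P" if t: "t > 0" for t
    proof -
      have "n H \<bullet> (x + t *\<^sub>R y0) \<noteq> 0 \<and> (n H \<bullet> (x + t *\<^sub>R y0) > 0 \<longleftrightarrow> n H \<bullet> y0 > 0)" if H: "H \<in> A" for H
      proof -
        have e: "n H \<bullet> (x + t *\<^sub>R y0) = n H \<bullet> x + t * (n H \<bullet> y0)" by (simp add: inner_add_right)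
        have ny: "n H \<bullet> y0 \<noteq> 0" using assms H unfolding nz_def by blast
        show ?thesis
        proof (cases "n H \<bullet> y0 > 0")
          case True
          then have "H \<in> ?P" using H unfolding sgs_def by simp
          then have "n H \<bullet> x \<ge> 0" using wx H unfolding wk_def by blast
          moreover have "t * (n H \<bullet> y0) > 0" using t True by simp
          ultimately show ?thesis using e True by linarith
        next
          case False
          then have "H \<notin> ?P" unfolding sgs_def by simp
          then have "n H \<bullet> x \<le> 0" using wx H unfolding wk_def by blast
          moreover have "t * (n H \<bullet> y0) < 0" using t False ny by (simp add: mult_pos_neg)
          ultimately show ?thesis using e False by linarith
        qed
      qed
      then show ?thesis unfolding cell_def nz_def sgs_def by auto
    qed
    show "x \<in> closure (cell n A ?P)"
      unfolding closure_approachable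
    proof (intro allI impI)
      fix e :: real assume e: "e > 0"
      define t where "t = e / (2 * (norm y0 + 1))"
      have np: "norm y0 + 1 > 0" using norm_ge_zero[of y0] by linarith
      then have "2 * (norm y0 + 1) > 0" by simp
      then have t: "t > 0" unfolding t_def using e by (intro divide_pos_pos)
      have "dist (x + t *\<^sub>R y0) x = t * norm y0" unfolding dist_norm using t by simp
      also have "\<dots> < e"
      proof -
        have "t * norm y0 \<le> t * (norm y0 + 1)" using t by simp
        also have "\<dots> = e / 2" unfolding t_def using np by (simp add: field_simps)
        finally show ?thesis using e by linarith
      qed
      finally show "\<exists>y\<in>cell n A ?P. dist y x < e" using inc[OF t] by blast
    qed
  qed
qed


lemma claim1_sign:
  fixes n :: "'b \<Rightarrow> 'a::euclidean_space"
  assumes fin: "finite A" and g: "gen n UNIV A L" and L: "subspace L" and y0: "nz n A y0"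
    and x: "x \<in> L" "x \<noteq> 0" "wk n A (sgs n A y0) x"
  shows "\<exists>x'\<in>L. nz n A x' \<and> sgs n A x' = sgs n A y0"
proof -
  let ?P = "sgs n A y0"
  define B where "B = {H\<in>A. n H \<bullet> x = 0}"
  have "\<exists>l\<in>L. \<forall>H\<in>B. n H \<bullet> l = n H \<bullet> y0"
  proof (cases "B = {}")
    case True then show ?thesis using subspace_0[OF L] by blast
  next
    case False
    let ?S = "\<Inter>(hp n ` B)"
    have S: "subspace ?S" by (rule subspace_Inter) (auto simp: subspace_hp)
    have BA: "B \<subseteq> A" unfolding B_def by blast
    have gB: "dim (?S \<inter> L) = dim L - (dim (UNIV::'a set) - dim (?S \<inter> UNIV))"
      using genD[OF g False BA] by simp
    have xin: "x \<in> ?S \<inter> L" using x(1) unfolding B_def hp_def by auto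
    have d1: "dim (?S \<inter> L) \<ge> 1"
    proof (rule ccontr)
      assume "\<not> dim (?S \<inter> L) \<ge> 1"
      then have "dim (?S \<inter> L) = 0" by linarith
      then have "?S \<inter> L \<subseteq> {0}" by (rule dim0D)
      then show False using xin x(2) by blast
    qed
    let ?T = "{a + b | a b. a \<in> ?S \<and> b \<in> L}"
    have sums: "dim ?T + dim (?S \<inter> L) = dim ?S + dim L" by (rule dim_sums_Int[OF S L])
    have u1: "dim ?S \<le> DIM('a)" "dim ?T \<le> DIM('a)" by (rule dim_subset_UNIV)+
    have gB': "dim (?S \<inter> L) = dim L - (DIM('a) - dim ?S)" using gB by simp
    have "dim ?T = DIM('a)" using gB' d1 sums u1 by linarith
    then have "span ?T = UNIV" by (simp only: dim_eq_full)
    moreover have "span ?T = ?T" by (rule span_eq_iff[THEN iffD2, OF subspace_sums[OF S L]])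
    ultimately have "y0 \<in> ?T" by simp
    then obtain a b where ab: "a \<in> ?S" "b \<in> L" "y0 = a + b" by blast
    have "\<forall>H\<in>B. n H \<bullet> b = n H \<bullet> y0"
    proof
      fix H assume "H \<in> B"
      then have "n H \<bullet> a = 0" using ab(1) unfolding hp_def by blast
      then show "n H \<bullet> b = n H \<bullet> y0" using ab(3) by (simp add: inner_add_right)
    qed
    then show ?thesis using ab(2) by blast
  qed
  then obtain l where l: "l \<in> L" "\<forall>H\<in>B. n H \<bullet> l = n H \<bullet> y0" by blast
  obtain t where t: "t > 0" "\<forall>H\<in>A. n H \<bullet> x \<noteq> 0 \<longrightarrow> \<bar>t * (n H \<bullet> l)\<bar> < \<bar>n H \<bullet> x\<bar>"
    using small_t[OF fin] by blast
  define x' where "x' = x + t *\<^sub>R l"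
  have x'L: "x' \<in> L" unfolding x'_def using x(1) l(1) L by (simp add: subspace_add subspace_scale)
  have key: "n H \<bullet> x' \<noteq> 0 \<and> (n H \<bullet> x' > 0 \<longleftrightarrow> H \<in> ?P)" if H: "H \<in> A" for H
  proof -
    have e: "n H \<bullet> x' = n H \<bullet> x + t * (n H \<bullet> l)" unfolding x'_def by (simp add: inner_add_right)
    show ?thesis
    proof (cases "n H \<bullet> x = 0")
      case True
      then have "H \<in> B" using H unfolding B_def by blast
      then have "n H \<bullet> x' = t * (n H \<bullet> y0)" using e True l(2) by simp
      moreover have "n H \<bullet> y0 \<noteq> 0" using y0 H unfolding nz_def by blast
      moreover have "H \<in> ?P \<longleftrightarrow> n H \<bullet> y0 > 0" using H unfolding sgs_def by simp
      ultimately show ?thesis using t(1) by (auto simp: zero_less_mult_iff)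
    next
      case False
      have lt: "\<bar>t * (n H \<bullet> l)\<bar> < \<bar>n H \<bullet> x\<bar>" using t(2) H False by blast
      show ?thesis
      proof (cases "H \<in> ?P")
        case True
        then have "n H \<bullet> x \<ge> 0" using x(3) H unfolding wk_def by blast
        then have "n H \<bullet> x > 0" using False by linarith
        then have "n H \<bullet> x' > 0" using e lt by linarith
        then show ?thesis using True by simp
      next
        case notP: False
        then have "n H \<bullet> x \<le> 0" using x(3) H unfolding wk_def by blast
        then have "n H \<bullet> x < 0" using False by linarith
        then have "n H \<bullet> x' < 0" using e lt by linarith
        then show ?thesis using notP by simp
      qed
    qed
  qed
  have "nz n A x'" unfolding nz_def using key by blast
  moreover have "sgs n A x' = ?P"
  proof -
    have "?P \<subseteq> A" unfolding sgs_def by blast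
    then show ?thesis unfolding sgs_def[of n A x'] using key by blast
  qed
  ultimately show ?thesis using x'L by blast
qed


lemma card_transfer:
  assumes "inj_on f S"
  shows "card {R \<in> f ` S. Q R} = card {P\<in>S. Q (f P)}"
proof -
  have "{R \<in> f ` S. Q R} = f ` {P\<in>S. Q (f P)}" by blast
  moreover have "inj_on f {P\<in>S. Q (f P)}" using assms by (rule inj_on_subset) blast
  ultimately show ?thesis by (simp add: card_image)
qed

lemma set_transfer: "{R \<in> f ` S. Q R} = f ` {P\<in>S. Q (f P)}" by blast

lemma E1: "{P \<in> {sgs n A y | y. nz n A y}. cell n A P \<inter> M \<noteq> {}} = fS n A M"
proof
  show "{P \<in> {sgs n A y | y. nz n A y}. cell n A P \<inter> M \<noteq> {}} \<subseteq> fS n A M"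
  proof
    fix P assume "P \<in> {P \<in> {sgs n A y | y. nz n A y}. cell n A P \<inter> M \<noteq> {}}"
    then obtain x where "x \<in> M" "nz n A x" "sgs n A x = P" unfolding cell_def by blast
    then show "P \<in> fS n A M" using fS_memI by blast
  qed
next
  show "fS n A M \<subseteq> {P \<in> {sgs n A y | y. nz n A y}. cell n A P \<inter> M \<noteq> {}}"
  proof
    fix P assume "P \<in> fS n A M"
    then obtain x where "x \<in> M" "nz n A x" "P = sgs n A x" using fS_memE by blast
    then show "P \<in> {P \<in> {sgs n A y | y. nz n A y}. cell n A P \<inter> M \<noteq> {}}" unfolding cell_def by blast
  qed
qed

lemma E2:
  assumes "0 \<in> M"
  shows "{P \<in> {sgs n A y | y. nz n A y}. closure (cell n A P) \<inter> M \<noteq> {0}} = gS n UNIV A M"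
proof -
  have "closure (cell n A P) \<inter> M \<noteq> {0} \<longleftrightarrow> (\<exists>x\<in>M. x \<noteq> 0 \<and> wk n A P x)"
    if P: "P \<in> {sgs n A y | y. nz n A y}" for P
  proof -
    obtain y0 where y0: "nz n A y0" "P = sgs n A y0" using P by blast
    have c: "closure (cell n A P) = {x. wk n A P x}" using closure_cell[OF y0(1)] y0(2) by simp
    have "wk n A P 0" unfolding wk_def by simp
    then have "0 \<in> closure (cell n A P) \<inter> M" using c assms by simp
    then show ?thesis using c by blast
  qed
  then show ?thesis unfolding gS_def by blast
qed


theorem lemma3p5:
  fixes A :: "'a::euclidean_space set set" and L L' :: "'a set" and d :: nat
  assumes "lin_arrangement A"
    and "d \<le> DIM('a) - 1"
    and "subspace L" and "dim L = DIM('a) - d"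
    and "subspace L'" and "dim L' = DIM('a) - d"
    and "general_position A d L"
  shows "{R \<in> regions A. closure R \<inter> L \<noteq> {0}} = {R \<in> regions A. R \<inter> L \<noteq> {}}
    \<and> card {R \<in> regions A. closure R \<inter> L' \<noteq> {0}} \<ge> card {R \<in> regions A. closure R \<inter> L \<noteq> {0}}
    \<and> card {R \<in> regions A. R \<inter> L' \<noteq> {}} \<le> card {R \<in> regions A. R \<inter> L \<noteq> {}}"
proof -
  define n :: "'a set \<Rightarrow> 'a" where "n H = (SOME a. a \<noteq> 0 \<and> H = {x. a \<bullet> x = 0})" for H
  have fin: "finite A" using assms(1) unfolding lin_arrangement_def by blast
  have hpA: "\<forall>H\<in>A. H = hp n H"
  proof
    fix H assume "H \<in> A"
    then have "\<exists>a. a \<noteq> 0 \<and> H = {x. a \<bullet> x = 0}" using assms(1) unfolding lin_arrangement_def lin_hyperplane_def by blast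
    then have "n H \<noteq> 0 \<and> H = {x. n H \<bullet> x = 0}" unfolding n_def by (rule someI_ex)
    then show "H = hp n H" unfolding hp_def by blast
  qed
  have DIMp: "DIM('a) \<ge> 1" using DIM_positive[where 'a='a] by linarith
  have k: "dim L \<ge> 1" "dim L' = dim L" using assms(2,4,6) DIMp by linarith+
  have g: "gen n UNIV A L"
    unfolding gen_def
  proof (intro allI impI)
    fix B assume B: "B \<noteq> {} \<and> B \<subseteq> A"
    have hB: "hp n ` B = B"
    proof
      show "hp n ` B \<subseteq> B" using hpA B by (metis image_subsetI subsetD)
      show "B \<subseteq> hp n ` B" using hpA B by (metis image_eqI subsetD subsetI)
    qed
    have e: "(\<Inter>H\<in>B. H \<inter> L) = \<Inter>B \<inter> L" using B by blast
    have gp: "dim (\<Inter>H\<in>B. H \<inter> L) = (if arr_rank B \<le> DIM('a) - d then DIM('a) - d - arr_rank B else 0)"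
      using assms(7) B unfolding general_position_def by blast
    have "dim (\<Inter>B \<inter> L) = dim L - (DIM('a) - dim (\<Inter>B))"
      using gp unfolding e arr_rank_def assms(4) by simp
    then show "dim (\<Inter>(hp n ` B) \<inter> L) = dim L - (dim (UNIV::'a set) - dim (\<Inter>(hp n ` B) \<inter> UNIV))"
      unfolding hB by simp
  qed
  let ?SS = "{sgs n A y | y. nz n A y}"
  have reg: "regions A = cell n A ` ?SS" by (rule regions_eq[OF hpA])
  have inj: "inj_on (cell n A) ?SS" by (rule inj_cell)
  have L0: "0 \<in> L" "0 \<in> L'" using assms(3,5) by (simp_all add: subspace_0)
  have fg: "fS n A L = gS n UNIV A L"
  proof
    show "fS n A L \<subseteq> gS n UNIV A L"
    proof
      fix P assume "P \<in> fS n A L"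
      then obtain x where x: "x \<in> L" "nz n A x" "P = sgs n A x" using fS_memE by blast
      have "\<exists>x'\<in>L. x' \<noteq> 0 \<and> wk n A P x'"
      proof (cases "x = 0")
        case False
        have "wk n A P x" unfolding x(3) wk_def sgs_def by auto
        then show ?thesis using x(1) False by blast
      next
        case True
        then have "A = {}" using x(2) unfolding nz_def by auto
        obtain v where "v \<in> L" "v \<noteq> 0" using nonzero_of_dim[OF k(1)] by blast
        moreover have "wk n A P v" unfolding \<open>A = {}\<close> wk_def by simp
        ultimately show ?thesis by blast
      qed
      then show "P \<in> gS n UNIV A L" unfolding gS_def using x(2,3) by blast
    qed
  next
    show "gS n UNIV A L \<subseteq> fS n A L"
    proof
      fix P assume "P \<in> gS n UNIV A L"
      then obtain y0 x where y0: "nz n A y0" "P = sgs n A y0" and x: "x \<in> L" "x \<noteq> 0" "wk n A P x"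
        unfolding gS_def by blast
      obtain x' where "x' \<in> L" "nz n A x'" "sgs n A x' = P"
        using claim1_sign[OF fin g assms(3) y0(1) x(1,2)] x(3) y0(2) by blast
      then show "P \<in> fS n A L" using fS_memI by metis
    qed
  qed
  have c1: "{R \<in> regions A. closure R \<inter> L \<noteq> {0}} = cell n A ` gS n UNIV A L"
    unfolding reg set_transfer E2[OF L0(1)] ..
  have c2: "{R \<in> regions A. R \<inter> L \<noteq> {}} = cell n A ` fS n A L"
    unfolding reg set_transfer E1 ..
  have part1: "{R \<in> regions A. closure R \<inter> L \<noteq> {0}} = {R \<in> regions A. R \<inter> L \<noteq> {}}"
    unfolding c1 c2 fg ..
  have cardg: "card {R \<in> regions A. closure R \<inter> M \<noteq> {0}} = card (gS n UNIV A M)" if "0 \<in> M" for M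
    unfolding reg card_transfer[OF inj] E2[OF that] ..
  have cardf: "card {R \<in> regions A. R \<inter> M \<noteq> {}} = card (fS n A M)" for M
    unfolding reg card_transfer[OF inj] E1 ..
  have part2: "card (fS n A L) \<le> card (gS n UNIV A L')"
    using claim2_gen[OF fin, of n, rule_format, OF subspace_UNIV assms(3) assms(5) subset_UNIV subset_UNIV]
      k g by simp
  have part3: "card (fS n A L') \<le> card (fS n A L)"
    using claim3_gen[OF fin, of n, rule_format, OF subspace_UNIV assms(3) assms(5) subset_UNIV subset_UNIV]
      k g by simp
  have "card {R \<in> regions A. closure R \<inter> L \<noteq> {0}} = card (fS n A L)"
    unfolding part1 cardf ..
  then show ?thesis using part1 part2 part3 cardg[OF L0(2)] cardf[of L'] cardf[of L] by simp
qed

end
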